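(* In the setting of the context (with $\mathcal S_t\subset\mathcal S_{t+1}$ for all $t$), for every $t$: (a) $\mathcal D_t=\{\{s,q\}\subset\{1,\dots,t\}: s\neq q,\ s\notin\mathcal S_q,\ q\notin\mathcal S_s\}$; (b) $\mathcal B_t=\{\{s,q\}\subset\mathcal S_t: s\neq q,\ s\notin\mathcal S_q,\ q\notin\mathcal S_s\}$.
   Context: Delayed feedback protocol over rounds $t=1,\dots,T$: at each round a point is played and its feedback (indexed by the timestamp $t$) is revealed later. $\mathcal S_t\subset\{1,\dots,t-1\}$ is the set of timestamps of feedback available to the active agent at time $t$, and it is assumed that $\mathcal S_t\subset\mathcal S_{t+1}$ for all $t$. Let $\mathcal U_t=\{1,\dots,t-1\}\setminus\mathcal S_t$. Arrival order: $\sigma$ is a permutation of $\{1,\dots,T\}$ such that $\mathcal S_t=\{\sigma(1),\dots,\sigma(|\mathcal S_t|)\}$ for all $t$; $\mathcal R_t=\{\sigma(1),\dots,\sigma(\sigma^{-1}(t)-1)\}$. Define the sets of unordered pairs of distinct elements $\mathcal D_t=\{\{s,q\}: s\in\{1,\dots,t\},\ q\in\mathcal U_s\}$ and $\mathcal B_t=\{\{s,q\}: s\in\mathcal S_t,\ q\in\mathcal R_s\setminus\mathcal S_s\}$. *)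

theory Defs
  imports Main
begin

text \<open>Delayed feedback protocol. Rounds are 1..T; S t is the set of timestamps of
feedback available at time t; sigma is the arrival order (a permutation of {1..T}).\<close>

definition U :: "(nat \<Rightarrow> nat set) \<Rightarrow> nat \<Rightarrow> nat set" where
  "U S t = {1..<t} - S t"

definition R :: "(nat \<Rightarrow> nat) \<Rightarrow> nat \<Rightarrow> nat \<Rightarrow> nat set" where
  "R \<sigma> T t = \<sigma> ` {1..<inv_into {1..T} \<sigma> t}"

definition D :: "(nat \<Rightarrow> nat set) \<Rightarrow> nat \<Rightarrow> nat set set" where
  "D S t = {{s, q} | s q. s \<in> {1..t} \<and> q \<in> U S s}"

definition B :: "(nat \<Rightarrow> nat set) \<Rightarrow> (nat \<Rightarrow> nat) \<Rightarrow> nat \<Rightarrow> nat \<Rightarrow> nat set set" where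
  "B S \<sigma> T t = {{s, q} | s q. s \<in> S t \<and> q \<in> R \<sigma> T s - S s}"

end

theory Submission
  imports Defs
begin

theorem proposition9:
  fixes T :: nat and S :: "nat \<Rightarrow> nat set" and \<sigma> :: "nat \<Rightarrow> nat" and t :: nat
  assumes S_sub: "\<And>t. t \<in> {1..T} \<Longrightarrow> S t \<subseteq> {1..<t}"
    and S_mono: "\<And>t. t \<in> {1..<T} \<Longrightarrow> S t \<subseteq> S (Suc t)"
    and perm: "bij_betw \<sigma> {1..T} {1..T}"
    and arrival: "\<And>t. t \<in> {1..T} \<Longrightarrow> S t = \<sigma> ` {1..card (S t)}"
    and t: "t \<in> {1..T}"
  shows "D S t = {{s, q} | s q. {s, q} \<subseteq> {1..t} \<and> s \<noteq> q \<and> s \<notin> S q \<and> q \<notin> S s}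
    \<and> B S \<sigma> T t = {{s, q} | s q. {s, q} \<subseteq> S t \<and> s \<noteq> q \<and> s \<notin> S q \<and> q \<notin> S s}"
proof
  define idx where "idx = inv_into {1..T} \<sigma>"
  have inj: "inj_on \<sigma> {1..T}" using bij_betw_imp_inj_on[OF perm] .
  have im: "\<sigma> ` {1..T} = {1..T}" using bij_betw_imp_surj_on[OF perm] .
  have idx1: "idx x \<in> {1..T} \<and> \<sigma> (idx x) = x" if "x \<in> {1..T}" for x
  proof -
    have x: "x \<in> \<sigma> ` {1..T}" using that im by simp
    show ?thesis unfolding idx_def using inv_into_into[OF x] f_inv_into_f[OF x] by simp
  qed
  have idx2: "idx (\<sigma> j) = j" if "j \<in> {1..T}" for j
    unfolding idx_def using inv_into_f_f[OF inj that] .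
  have cardS: "card (S u) < T" if "u \<in> {1..T}" for u
  proof -
    have "card (S u) \<le> card {1..<u}" using S_sub[OF that] by (intro card_mono) auto
    thus ?thesis using that by auto
  qed
  have memS: "x \<in> S u \<longleftrightarrow> idx x \<le> card (S u)" if hu: "u \<in> {1..T}" and hx: "x \<in> {1..T}" for u x
  proof
    assume "x \<in> S u"
    then obtain j where j: "j \<in> {1..card (S u)}" "x = \<sigma> j" using arrival[OF hu] by blast
    then have "j \<in> {1..T}" using cardS[OF hu] by auto
    thus "idx x \<le> card (S u)" using j idx2 by auto
  next
    assume "idx x \<le> card (S u)"
    then have "idx x \<in> {1..card (S u)}" using idx1[OF hx] by auto
    then have "\<sigma> (idx x) \<in> S u" using arrival[OF hu] by blast
    thus "x \<in> S u" using idx1[OF hx] by simp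
  qed
  have Rchar: "R \<sigma> T s = {x \<in> {1..T}. idx x < idx s}" if hs: "s \<in> {1..T}" for s
  proof
    show "R \<sigma> T s \<subseteq> {x \<in> {1..T}. idx x < idx s}"
    proof
      fix x assume "x \<in> R \<sigma> T s"
      then obtain j where j: "j \<in> {1..<idx s}" "x = \<sigma> j" unfolding R_def idx_def[symmetric] by blast
      then have "j \<in> {1..T}" using idx1[OF hs] by auto
      thus "x \<in> {x \<in> {1..T}. idx x < idx s}" using j idx2 im by auto
    qed
  next
    show "{x \<in> {1..T}. idx x < idx s} \<subseteq> R \<sigma> T s"
    proof
      fix x assume x: "x \<in> {x \<in> {1..T}. idx x < idx s}"
      then have "idx x \<in> {1..<idx s}" using idx1 by auto
      then have "\<sigma> (idx x) \<in> R \<sigma> T s" unfolding R_def idx_def[symmetric] by blast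
      thus "x \<in> R \<sigma> T s" using idx1 x by simp
    qed
  qed
  have tT: "{1..t} \<subseteq> {1..T}" using t by auto
  have St: "S t \<subseteq> {1..T}" using S_sub[OF t] t by auto
  show "D S t = {{s, q} | s q. {s, q} \<subseteq> {1..t} \<and> s \<noteq> q \<and> s \<notin> S q \<and> q \<notin> S s}"
  proof
    show "D S t \<subseteq> {{s, q} | s q. {s, q} \<subseteq> {1..t} \<and> s \<noteq> q \<and> s \<notin> S q \<and> q \<notin> S s}"
    proof
      fix P assume "P \<in> D S t"
      then obtain s q where P: "P = {s,q}" "s \<in> {1..t}" "q \<in> U S s" unfolding D_def by blast
      then have q: "q \<in> {1..<s}" "q \<notin> S s" unfolding U_def by auto
      have "q \<in> {1..T}" using q P tT by auto
      then have "s \<notin> S q" using S_sub[of q] q by auto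
      thus "P \<in> {{s, q} | s q. {s, q} \<subseteq> {1..t} \<and> s \<noteq> q \<and> s \<notin> S q \<and> q \<notin> S s}"
      proof -
        have "{s, q} \<subseteq> {1..t}" using P q by auto
        moreover have "s \<noteq> q" using q by auto
        ultimately show ?thesis using P(1) q(2) \<open>s \<notin> S q\<close> by blast
      qed
    qed
  next
    show "{{s, q} | s q. {s, q} \<subseteq> {1..t} \<and> s \<noteq> q \<and> s \<notin> S q \<and> q \<notin> S s} \<subseteq> D S t"
    proof
      fix P assume "P \<in> {{s, q} | s q. {s, q} \<subseteq> {1..t} \<and> s \<noteq> q \<and> s \<notin> S q \<and> q \<notin> S s}"
      then obtain s q where P: "P = {s,q}" "{s, q} \<subseteq> {1..t}" "s \<noteq> q" "s \<notin> S q" "q \<notin> S s"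
        by blast
      show "P \<in> D S t"
      proof (cases "q < s")
        case True
        then have "q \<in> U S s" using P unfolding U_def by auto
        thus ?thesis using P unfolding D_def by blast
      next
        case False
        then have "s \<in> U S q" using P unfolding U_def by auto
        moreover have "P = {q,s}" using P by auto
        ultimately show ?thesis using P unfolding D_def by blast
      qed
    qed
  qed
  show "B S \<sigma> T t = {{s, q} | s q. {s, q} \<subseteq> S t \<and> s \<noteq> q \<and> s \<notin> S q \<and> q \<notin> S s}"
  proof
    show "B S \<sigma> T t \<subseteq> {{s, q} | s q. {s, q} \<subseteq> S t \<and> s \<noteq> q \<and> s \<notin> S q \<and> q \<notin> S s}"
    proof
      fix P assume "P \<in> B S \<sigma> T t"
      then obtain s q where P: "P = {s,q}" "s \<in> S t" "q \<in> R \<sigma> T s" "q \<notin> S s"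
        unfolding B_def by blast
      have s: "s \<in> {1..T}" using P St by auto
      have q: "q \<in> {1..T}" "idx q < idx s" using P(3) Rchar[OF s] by auto
      have "idx s \<le> card (S t)" using memS[OF t s] P by auto
      then have qt: "q \<in> S t" using memS[OF t q(1)] q by auto
      have sq: "s \<noteq> q" using q by auto
      have "s \<notin> S q"
      proof
        assume "s \<in> S q"
        then have "idx s \<le> card (S q)" using memS[OF q(1) s] by auto
        then have "q \<in> S q" using memS[OF q(1) q(1)] q by auto
        thus False using S_sub[OF q(1)] by auto
      qed
      thus "P \<in> {{s, q} | s q. {s, q} \<subseteq> S t \<and> s \<noteq> q \<and> s \<notin> S q \<and> q \<notin> S s}"
        using P(1,2,4) qt sq St by blast
    qed
  next
    show "{{s, q} | s q. {s, q} \<subseteq> S t \<and> s \<noteq> q \<and> s \<notin> S q \<and> q \<notin> S s} \<subseteq> B S \<sigma> T t"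
    proof
      fix P assume "P \<in> {{s, q} | s q. {s, q} \<subseteq> S t \<and> s \<noteq> q \<and> s \<notin> S q \<and> q \<notin> S s}"
      then obtain s q where P: "P = {s,q}" "{s, q} \<subseteq> S t" "s \<noteq> q" "s \<notin> S q" "q \<notin> S s"
        by blast
      have s: "s \<in> {1..T}" and q: "q \<in> {1..T}" using P St by auto
      have "idx s \<noteq> idx q" using P(3) idx1[OF s] idx1[OF q] by metis
      show "P \<in> B S \<sigma> T t"
      proof (cases "idx q < idx s")
        case True
        then have "q \<in> R \<sigma> T s" using Rchar[OF s] q by auto
        thus ?thesis using P unfolding B_def by blast
      next
        case False
        then have "s \<in> R \<sigma> T q" using Rchar[OF q] s \<open>idx s \<noteq> idx q\<close> by auto
        moreover have "P = {q,s}" using P by auto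
        ultimately show ?thesis using P unfolding B_def by blast
      qed
    qed
  qed
qed

end
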